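(* A point $z\in\mathbb{R}^{d\times(n+1)}$ belongs to $\bigcup_{H\in\mathcal{H}}\Delta_H$ if and only if there exists $\delta$ such that $(z,\delta)$ satisfies (Inc-1); i.e. (Inc-1) is an MILP formulation of $\{\Delta_H\}_{H\in\mathcal{H}}$. Moreover, with $F(z)=(F_1(z_1),\dots,F_d(z_d))$ for $z\in\Delta$, one has $F(\Delta_H)=H$ for each $H\in\mathcal{H}$.
   Context: Let $d,n$ be positive integers, $[k]=\{1,\dots,k\}$. Let $a\in\mathbb{R}^{d\times(n+1)}$ with $a_{i0}<\dots<a_{in}$ for each $i$. For each $i$ let $l_i\ge1$ and $0=\tau(i,0)<\tau(i,1)<\dots<\tau(i,l_i)=n$ be integers. $\mathcal{H}=\{\prod_{i=1}^d[a_{i\tau(i,t_i-1)},a_{i\tau(i,t_i)}]\mid t_i\in[l_i]\}$. $\Delta_i=\{z_i\in\mathbb{R}^{n+1}\mid1=z_{i0}\ge z_{i1}\ge\dots\ge z_{in}\ge0\}$, $\Delta=\prod_i\Delta_i$. For $H=\prod_i[a_{i\tau(i,t_i-1)},a_{i\tau(i,t_i)}]$, $\Delta_H=\{z\in\Delta\mid z_{ij}=1\text{ for }j\le\tau(i,t_i-1),\ z_{ij}=0\text{ for }j>\tau(i,t_i),\ \forall i\}$. (Inc-1) in $(z,\delta)$, $\delta=(\delta_{it})_{i\in[d],t\in[l_i-1]}$: $z_i\in\Delta_i$, $\delta_{it}\in\{0,1\}$, $z_{i\tau(i,t)}\ge\delta_{it}\ge z_{i\tau(i,t)+1}$. $F_i(z_i)=a_{i0}z_{i0}+\sum_{j=1}^n(a_{ij}-a_{i,j-1})z_{ij}$.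 *)

theory Defs
  imports "HOL-Library.FuncSet" Complex_Main
begin

text \<open>Points of R^(d x (n+1)) are modelled as extensional functions
  z :: nat => nat => real with row index i in {1..d} and column index j in {0..n}.\<close>

definition Delta_i :: "nat \<Rightarrow> (nat \<Rightarrow> real) set" where
  "Delta_i n = {zi \<in> extensional {0..n}. zi 0 = 1 \<and> (\<forall>j\<in>{1..n}. zi j \<le> zi (j - 1)) \<and> zi n \<ge> 0}"

definition Delta :: "nat \<Rightarrow> nat \<Rightarrow> (nat \<Rightarrow> nat \<Rightarrow> real) set" where
  "Delta d n = (\<Pi>\<^sub>E i\<in>{1..d}. Delta_i n)"

definition Tset :: "nat \<Rightarrow> (nat \<Rightarrow> nat) \<Rightarrow> (nat \<Rightarrow> nat) set" where
  "Tset d l = (\<Pi>\<^sub>E i\<in>{1..d}. {1..l i})"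

definition boxH :: "nat \<Rightarrow> (nat \<Rightarrow> nat \<Rightarrow> real) \<Rightarrow> (nat \<Rightarrow> nat \<Rightarrow> nat) \<Rightarrow> (nat \<Rightarrow> nat) \<Rightarrow> (nat \<Rightarrow> real) set" where
  "boxH d a \<tau> t = (\<Pi>\<^sub>E i\<in>{1..d}. {a i (\<tau> i (t i - 1)) .. a i (\<tau> i (t i))})"

definition calH :: "nat \<Rightarrow> (nat \<Rightarrow> nat \<Rightarrow> real) \<Rightarrow> (nat \<Rightarrow> nat) \<Rightarrow> (nat \<Rightarrow> nat \<Rightarrow> nat) \<Rightarrow> (nat \<Rightarrow> real) set set" where
  "calH d a l \<tau> = boxH d a \<tau> ` Tset d l"

definition DeltaH :: "nat \<Rightarrow> nat \<Rightarrow> (nat \<Rightarrow> nat \<Rightarrow> nat) \<Rightarrow> (nat \<Rightarrow> nat) \<Rightarrow> (nat \<Rightarrow> nat \<Rightarrow> real) set" where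
  "DeltaH d n \<tau> t = {z \<in> Delta d n. \<forall>i\<in>{1..d}.
      (\<forall>j\<in>{0..n}. j \<le> \<tau> i (t i - 1) \<longrightarrow> z i j = 1) \<and>
      (\<forall>j\<in>{0..n}. j > \<tau> i (t i) \<longrightarrow> z i j = 0)}"

definition Inc1 :: "nat \<Rightarrow> nat \<Rightarrow> (nat \<Rightarrow> nat) \<Rightarrow> (nat \<Rightarrow> nat \<Rightarrow> nat) \<Rightarrow>
    (nat \<Rightarrow> nat \<Rightarrow> real) \<Rightarrow> (nat \<Rightarrow> nat \<Rightarrow> real) \<Rightarrow> bool" where
  "Inc1 d n l \<tau> z \<delta> \<longleftrightarrow> z \<in> Delta d n \<and>
     (\<forall>i\<in>{1..d}. \<forall>t\<in>{1..l i - 1}.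
        \<delta> i t \<in> {0, 1} \<and> z i (\<tau> i t) \<ge> \<delta> i t \<and> \<delta> i t \<ge> z i (\<tau> i t + 1))"

definition F_i :: "nat \<Rightarrow> (nat \<Rightarrow> nat \<Rightarrow> real) \<Rightarrow> nat \<Rightarrow> (nat \<Rightarrow> real) \<Rightarrow> real" where
  "F_i n a i zi = a i 0 * zi 0 + (\<Sum>j=1..n. (a i j - a i (j - 1)) * zi j)"

definition Fvec :: "nat \<Rightarrow> nat \<Rightarrow> (nat \<Rightarrow> nat \<Rightarrow> real) \<Rightarrow> (nat \<Rightarrow> nat \<Rightarrow> real) \<Rightarrow> (nat \<Rightarrow> real)" where
  "Fvec d n a z = restrict (\<lambda>i. F_i n a i (z i)) {1..d}"

end

theory Submission
  imports Defs
begin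

lemma strict_chain:
  fixes f :: "nat \<Rightarrow> 'a::linorder"
  assumes "\<And>j. 1 \<le> j \<Longrightarrow> j \<le> m \<Longrightarrow> f (j - 1) < f j"
  shows "j < k \<Longrightarrow> k \<le> m \<Longrightarrow> f j < f k"
proof (induction k)
  case 0 then show ?case by simp
next
  case (Suc k)
  have s: "f k < f (Suc k)" using assms[of "Suc k"] Suc.prems by simp
  show ?case
  proof (cases "j = k")
    case True then show ?thesis using s by simp
  next
    case False then have "f j < f k" using Suc by simp
    then show ?thesis using s by simp
  qed
qed

lemma weak_chain:
  fixes f :: "nat \<Rightarrow> 'a::linorder"
  assumes "\<And>j. 1 \<le> j \<Longrightarrow> j \<le> m \<Longrightarrow> f (j - 1) < f j"
  shows "j \<le> k \<Longrightarrow> k \<le> m \<Longrightarrow> f j \<le> f k"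
  using strict_chain[of m f j k] assms by (cases "j = k") auto

lemma row_mono:
  assumes "zi \<in> Delta_i n" "j \<le> k" "k \<le> n"
  shows "zi k \<le> zi j"
  using assms(2,3)
proof (induction k rule: dec_induct)
  case base then show ?case by simp
next
  case (step k)
  have "zi (Suc k) \<le> zi k" using assms(1) step.prems unfolding Delta_i_def by force
  then show ?case using step by simp
qed

lemma row_bounds:
  assumes "zi \<in> Delta_i n" "j \<le> n"
  shows "0 \<le> zi j" "zi j \<le> 1"
proof -
  have "zi n \<le> zi j" using row_mono assms by blast
  then show "0 \<le> zi j" using assms unfolding Delta_i_def by auto
  have "zi j \<le> zi 0" using row_mono[OF assms(1), of 0 j] assms by simp
  then show "zi j \<le> 1" using assms unfolding Delta_i_def by auto
qed

lemma telescope: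
  fixes g :: "nat \<Rightarrow> real"
  shows "(\<Sum>j=1..k. g j - g (j - 1)) = g k - g 0"
  by (induction k) auto

lemma sum_if_le:
  fixes f :: "nat \<Rightarrow> real"
  assumes "p \<le> n"
  shows "(\<Sum>j=1..n. if j \<le> p then f j else 0) = (\<Sum>j=1..p. f j)"
proof -
  have "(\<Sum>j=1..n. if j \<le> p then f j else 0) = (\<Sum>j\<in>{j\<in>{1..n}. j \<le> p}. f j)"
    by (rule sum.inter_filter[symmetric]) simp
  also have "{j\<in>{1..n}. j \<le> p} = {1..p}" using assms by auto
  finally show ?thesis .
qed


lemma row_F_bounds:
  fixes ai :: "nat \<Rightarrow> real"
  assumes zi: "zi \<in> Delta_i n" and pq: "p \<le> q" "q \<le> n"
    and a: "\<And>j. 1 \<le> j \<Longrightarrow> j \<le> n \<Longrightarrow> ai (j - 1) < ai j"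
    and one: "\<forall>j\<in>{0..n}. j \<le> p \<longrightarrow> zi j = 1"
    and zero: "\<forall>j\<in>{0..n}. j > q \<longrightarrow> zi j = 0"
  shows "ai p \<le> ai 0 * zi 0 + (\<Sum>j=1..n. (ai j - ai (j - 1)) * zi j)"
    "ai 0 * zi 0 + (\<Sum>j=1..n. (ai j - ai (j - 1)) * zi j) \<le> ai q"
proof -
  have z0: "zi 0 = 1" using zi unfolding Delta_i_def by auto
  have pos: "0 \<le> ai j - ai (j - 1)" if "j \<in> {1..n}" for j using a[of j] that by auto
  have "(\<Sum>j=1..n. if j \<le> p then ai j - ai (j - 1) else 0) \<le> (\<Sum>j=1..n. (ai j - ai (j - 1)) * zi j)"
  proof (rule sum_mono)
    fix j assume j: "j \<in> {1..n}"
    show "(if j \<le> p then ai j - ai (j - 1) else 0) \<le> (ai j - ai (j - 1)) * zi j"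
      using one j pos[OF j] row_bounds[OF zi, of j] by auto
  qed
  moreover have "(\<Sum>j=1..n. if j \<le> p then ai j - ai (j - 1) else 0) = ai p - ai 0"
    using sum_if_le[of p n "\<lambda>j. ai j - ai (j - 1)"] telescope[of ai p] pq by simp
  ultimately show "ai p \<le> ai 0 * zi 0 + (\<Sum>j=1..n. (ai j - ai (j - 1)) * zi j)" using z0 by simp
  have "(\<Sum>j=1..n. (ai j - ai (j - 1)) * zi j) \<le> (\<Sum>j=1..n. if j \<le> q then ai j - ai (j - 1) else 0)"
  proof (rule sum_mono)
    fix j assume j: "j \<in> {1..n}"
    show "(ai j - ai (j - 1)) * zi j \<le> (if j \<le> q then ai j - ai (j - 1) else 0)"
      using zero j pos[OF j] row_bounds[OF zi, of j] by (auto simp: mult_left_le)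
  qed
  moreover have "(\<Sum>j=1..n. if j \<le> q then ai j - ai (j - 1) else 0) = ai q - ai 0"
    using sum_if_le[of q n "\<lambda>j. ai j - ai (j - 1)"] telescope[of ai q] pq by simp
  ultimately show "ai 0 * zi 0 + (\<Sum>j=1..n. (ai j - ai (j - 1)) * zi j) \<le> ai q" using z0 by simp
qed

definition rowz :: "nat \<Rightarrow> (nat \<Rightarrow> real) \<Rightarrow> real \<Rightarrow> nat \<Rightarrow> real" where
  "rowz n ai x = restrict (\<lambda>j. if j = 0 then 1 else (min x (ai j) - min x (ai (j - 1))) / (ai j - ai (j - 1))) {0..n}"

lemma rowz_props:
  fixes ai :: "nat \<Rightarrow> real"
  assumes pq: "p \<le> q" "q \<le> n"
    and a: "\<And>j. 1 \<le> j \<Longrightarrow> j \<le> n \<Longrightarrow> ai (j - 1) < ai j"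
    and x: "ai p \<le> x" "x \<le> ai q"
  shows "rowz n ai x \<in> Delta_i n"
    "\<forall>j\<in>{0..n}. j \<le> p \<longrightarrow> rowz n ai x j = 1"
    "\<forall>j\<in>{0..n}. j > q \<longrightarrow> rowz n ai x j = 0"
    "ai 0 * rowz n ai x 0 + (\<Sum>j=1..n. (ai j - ai (j - 1)) * rowz n ai x j) = x"
proof -
  let ?z = "rowz n ai x"
  have mono: "j \<le> k \<Longrightarrow> k \<le> n \<Longrightarrow> ai j \<le> ai k" for j k using weak_chain[of n ai j k] a by blast
  have val: "?z j = (min x (ai j) - min x (ai (j - 1))) / (ai j - ai (j - 1))" if "1 \<le> j" "j \<le> n" for j
    using that by (simp add: rowz_def)
  have one1: "?z j = 1" if "1 \<le> j" "j \<le> n" "x \<ge> ai j" for j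
  proof -
    have "ai (j - 1) < ai j" using a that by simp
    then show ?thesis using val[OF that(1,2)] that(3) by simp
  qed
  have zero1: "?z j = 0" if "1 \<le> j" "j \<le> n" "x \<le> ai (j - 1)" for j
  proof -
    have "ai (j - 1) < ai j" using a that by simp
    then show ?thesis using val[OF that(1,2)] that(3) by simp
  qed
  have b01: "0 \<le> ?z j \<and> ?z j \<le> 1" if "1 \<le> j" "j \<le> n" for j
  proof -
    have d: "ai (j - 1) < ai j" using a that by simp
    have "0 \<le> min x (ai j) - min x (ai (j - 1))" "min x (ai j) - min x (ai (j - 1)) \<le> ai j - ai (j - 1)"
      using d by (auto simp: min_def)
    then show ?thesis using val[OF that] d by simp
  qed
  have z0: "?z 0 = 1" by (simp add: rowz_def)
  show "?z \<in> Delta_i n"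
    unfolding Delta_i_def
  proof (intro CollectI conjI ballI)
    show "?z \<in> extensional {0..n}" by (simp add: rowz_def)
    show "?z 0 = 1" by (rule z0)
    show "0 \<le> ?z n" using b01[of n] z0 by (cases "n = 0") auto
    fix j assume j: "j \<in> {1..n}"
    show "?z j \<le> ?z (j - 1)"
    proof (cases "j = 1")
      case True then show ?thesis using b01[of 1] z0 j by auto
    next
      case False
      show ?thesis
      proof (cases "x \<le> ai (j - 1)")
        case True then show ?thesis using zero1[of j] b01[of "j - 1"] j False by auto
      next
        case nt: False
        have "?z (j - 1) = 1" using one1[of "j - 1"] j False nt by auto
        then show ?thesis using b01[of j] j by auto
      qed
    qed
  qed
  show "\<forall>j\<in>{0..n}. j \<le> p \<longrightarrow> ?z j = 1"
  proof (intro ballI impI)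
    fix j assume "j \<in> {0..n}" "j \<le> p"
    then show "?z j = 1" using z0 one1[of j] mono[of j p] x pq by (cases "j = 0") auto
  qed
  show "\<forall>j\<in>{0..n}. j > q \<longrightarrow> ?z j = 0"
  proof (intro ballI impI)
    fix j assume "j \<in> {0..n}" "j > q"
    moreover have "ai q \<le> ai (j - 1)" using mono[of q "j - 1"] \<open>j \<in> {0..n}\<close> \<open>j > q\<close> by auto
    ultimately show "?z j = 0" using zero1[of j] x pq by auto
  qed
  have "(\<Sum>j=1..n. (ai j - ai (j - 1)) * ?z j) = (\<Sum>j=1..n. min x (ai j) - min x (ai (j - 1)))"
  proof (rule sum.cong)
    fix j assume j: "j \<in> {1..n}"
    have "ai (j - 1) < ai j" using a j by simp
    then show "(ai j - ai (j - 1)) * ?z j = min x (ai j) - min x (ai (j - 1))"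
      using val[of j] j by simp
  qed simp
  also have "\<dots> = min x (ai n) - min x (ai 0)" using telescope[of "\<lambda>j. min x (ai j)" n] by simp
  also have "\<dots> = x - ai 0" using mono[of 0 p] mono[of q n] x pq by simp
  finally show "ai 0 * ?z 0 + (\<Sum>j=1..n. (ai j - ai (j - 1)) * ?z j) = x" using z0 by simp
qed


lemma row_fwd:
  fixes L :: nat and tau :: "nat \<Rightarrow> nat"
  assumes zi: "zi \<in> Delta_i n"
    and tau: "L \<ge> 1" "tau 0 = 0" "tau L = n" "\<forall>s\<in>{1..L}. tau (s - 1) < tau s"
    and t: "t \<in> {1..L}"
    and one: "\<forall>j\<in>{0..n}. j \<le> tau (t - 1) \<longrightarrow> zi j = 1"
    and zero: "\<forall>j\<in>{0..n}. j > tau t \<longrightarrow> zi j = 0"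
    and s: "s \<in> {1..L - 1}"
  shows "(if s < t then 1 else 0) \<le> zi (tau s) \<and> zi (tau s + 1) \<le> (if s < t then 1 else (0::real))"
proof -
  have tm: "j \<le> k \<Longrightarrow> k \<le> L \<Longrightarrow> tau j \<le> tau k" for j k using weak_chain[of L tau j k] tau(4) by auto
  have "tau s < tau L" using strict_chain[of L tau s L] tau(4) s by auto
  then have sn: "tau s + 1 \<le> n" using tau(3) by simp
  show ?thesis
  proof (cases "s < t")
    case True
    then have "tau s \<le> tau (t - 1)" using tm[of s "t - 1"] t by auto
    then have "zi (tau s) = 1" using one sn by auto
    then show ?thesis using True row_bounds[OF zi sn] by simp
  next
    case False
    then have "tau t \<le> tau s" using tm[of t s] s by auto
    then have "zi (tau s + 1) = 0" using zero sn by auto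
    then show ?thesis using False row_bounds[OF zi, of "tau s"] sn by simp
  qed
qed

lemma row_bwd:
  fixes L :: nat and tau :: "nat \<Rightarrow> nat"
  assumes zi: "zi \<in> Delta_i n"
    and tau: "L \<ge> 1" "tau 0 = 0" "tau L = n" "\<forall>s\<in>{1..L}. tau (s - 1) < tau s"
    and del: "\<forall>s\<in>{1..L - 1}. (\<delta> s::real) \<in> {0, 1} \<and> zi (tau s) \<ge> \<delta> s \<and> \<delta> s \<ge> zi (tau s + 1)"
  shows "\<exists>t\<in>{1..L}. (\<forall>j\<in>{0..n}. j \<le> tau (t - 1) \<longrightarrow> zi j = 1) \<and> (\<forall>j\<in>{0..n}. j > tau t \<longrightarrow> zi j = 0)"
proof -
  let ?P = "\<lambda>s. 1 \<le> s \<and> s \<le> L \<and> (s = L \<or> \<delta> s = 0)"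
  define t where "t = (LEAST s. ?P s)"
  have Pt: "?P t" unfolding t_def by (rule LeastI[of ?P L]) (use tau in auto)
  have below: "\<not> ?P s" if "s < t" for s using not_less_Least[of s ?P] that t_def by auto
  have tm: "j \<le> k \<Longrightarrow> k \<le> L \<Longrightarrow> tau j \<le> tau k" for j k using weak_chain[of L tau j k] tau(4) by auto
  have z0: "zi 0 = 1" using zi unfolding Delta_i_def by auto
  show ?thesis
  proof (intro bexI conjI ballI impI)
    show "t \<in> {1..L}" using Pt by auto
    fix j assume j: "j \<in> {0..n}"
    {
      assume jt: "j \<le> tau (t - 1)"
      show "zi j = 1"
      proof (cases "t = 1")
        case True then show ?thesis using jt tau z0 by simp
      next
        case False
        then have s: "t - 1 \<in> {1..L - 1}" "t - 1 < t" using Pt by auto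
        then have "\<delta> (t - 1) \<noteq> 0" using below[of "t - 1"] by auto
        then have "\<delta> (t - 1) = 1" using del s by auto
        moreover have "zi (tau (t - 1)) \<ge> \<delta> (t - 1)" using del s(1) by blast
        ultimately have "zi (tau (t - 1)) \<ge> 1" by simp
        moreover have "tau (t - 1) \<le> n" using tm[of "t - 1" L] tau s by auto
        moreover have "zi (tau (t - 1)) \<le> zi j" using row_mono[OF zi jt] calculation by simp
        ultimately show ?thesis using row_bounds[OF zi, of j] j by auto
      qed
    }
    {
      assume jt: "j > tau t"
      have "t \<noteq> L" using jt j tau by auto
      then have s: "t \<in> {1..L - 1}" "\<delta> t = 0" using Pt by auto
      moreover have "zi (tau t + 1) \<le> \<delta> t" using del s(1) by blast
      ultimately have "zi (tau t + 1) \<le> 0" by simp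
      moreover have "zi j \<le> zi (tau t + 1)" using row_mono[OF zi, of "tau t + 1" j] jt j by auto
      ultimately show "zi j = 0" using row_bounds[OF zi, of j] j by auto
    }
  qed
qed


theorem lemma3p1:
  fixes d n :: nat and a :: "nat \<Rightarrow> nat \<Rightarrow> real"
    and l :: "nat \<Rightarrow> nat" and \<tau> :: "nat \<Rightarrow> nat \<Rightarrow> nat"
  assumes "d \<ge> 1" and "n \<ge> 1"
    and "\<forall>i\<in>{1..d}. \<forall>j\<in>{1..n}. a i (j - 1) < a i j"
    and "\<forall>i\<in>{1..d}. l i \<ge> 1 \<and> \<tau> i 0 = 0 \<and> \<tau> i (l i) = n \<and>
            (\<forall>t\<in>{1..l i}. \<tau> i (t - 1) < \<tau> i t)"
  shows "(\<forall>z. z \<in> (\<Union>t\<in>Tset d l. DeltaH d n \<tau> t) \<longleftrightarrow> (\<exists>\<delta>. Inc1 d n l \<tau> z \<delta>))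
       \<and> (\<forall>t\<in>Tset d l. Fvec d n a ` DeltaH d n \<tau> t = boxH d a \<tau> t)"
proof (intro conjI allI ballI)
  note A = assms(3) and T = assms(4)
  have zrow: "z i \<in> Delta_i n" if "z \<in> Delta d n" "i \<in> {1..d}" for z i
    using that unfolding Delta_def by auto
  fix z
  show "z \<in> (\<Union>t\<in>Tset d l. DeltaH d n \<tau> t) \<longleftrightarrow> (\<exists>\<delta>. Inc1 d n l \<tau> z \<delta>)"
  proof
    assume "z \<in> (\<Union>t\<in>Tset d l. DeltaH d n \<tau> t)"
    then obtain t where t: "t \<in> Tset d l" "z \<in> DeltaH d n \<tau> t" by auto
    define \<delta> where "\<delta> = (\<lambda>i s. if s < t i then 1 else (0::real))"
    have "Inc1 d n l \<tau> z \<delta>"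
      unfolding Inc1_def
    proof (intro conjI ballI)
      show "z \<in> Delta d n" using t unfolding DeltaH_def by auto
      fix i s assume i: "i \<in> {1..d}" and s: "s \<in> {1..l i - 1}"
      have r: "\<delta> i s \<le> z i (\<tau> i s) \<and> z i (\<tau> i s + 1) \<le> \<delta> i s"
        unfolding \<delta>_def
        apply (rule row_fwd[of "z i" n "l i" "\<tau> i" "t i"])
        using t i s T zrow unfolding DeltaH_def Tset_def by auto
      show "\<delta> i s \<in> {0, 1}" unfolding \<delta>_def by auto
      show "\<delta> i s \<le> z i (\<tau> i s)" using r by simp
      show "z i (\<tau> i s + 1) \<le> \<delta> i s" using r by simp
    qed
    then show "\<exists>\<delta>. Inc1 d n l \<tau> z \<delta>" by blast
  next
    assume "\<exists>\<delta>. Inc1 d n l \<tau> z \<delta>"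
    then obtain \<delta> where I: "Inc1 d n l \<tau> z \<delta>" by blast
    have zD: "z \<in> Delta d n" using I unfolding Inc1_def by auto
    have "\<forall>i\<in>{1..d}. \<exists>ti\<in>{1..l i}. (\<forall>j\<in>{0..n}. j \<le> \<tau> i (ti - 1) \<longrightarrow> z i j = 1) \<and>
                                (\<forall>j\<in>{0..n}. j > \<tau> i ti \<longrightarrow> z i j = 0)"
    proof
      fix i assume i: "i \<in> {1..d}"
      show "\<exists>ti\<in>{1..l i}. (\<forall>j\<in>{0..n}. j \<le> \<tau> i (ti - 1) \<longrightarrow> z i j = 1) \<and>
                                (\<forall>j\<in>{0..n}. j > \<tau> i ti \<longrightarrow> z i j = 0)"
        apply (rule row_bwd[of "z i" n "l i" "\<tau> i" "\<delta> i"])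
        using I i T zrow[OF zD i] unfolding Inc1_def by auto
    qed
    then obtain f where f: "\<forall>i\<in>{1..d}. f i \<in> {1..l i} \<and> (\<forall>j\<in>{0..n}. j \<le> \<tau> i (f i - 1) \<longrightarrow> z i j = 1) \<and>
                                (\<forall>j\<in>{0..n}. j > \<tau> i (f i) \<longrightarrow> z i j = 0)"
      by metis
    define t where "t = restrict f {1..d}"
    have "t \<in> Tset d l" using f unfolding t_def Tset_def by auto
    moreover have "z \<in> DeltaH d n \<tau> t" using f zD unfolding t_def DeltaH_def by auto
    ultimately show "z \<in> (\<Union>t\<in>Tset d l. DeltaH d n \<tau> t)" by blast
  qed
next
  note A = assms(3) and T = assms(4)
  have zrow: "z i \<in> Delta_i n" if "z \<in> Delta d n" "i \<in> {1..d}" for z i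
    using that unfolding Delta_def by auto
  fix t assume t: "t \<in> Tset d l"
  have pq: "\<tau> i (t i - 1) \<le> \<tau> i (t i)" "\<tau> i (t i) \<le> n" if i: "i \<in> {1..d}" for i
  proof -
    have ti: "t i \<in> {1..l i}" using t i unfolding Tset_def by auto
    show "\<tau> i (t i - 1) \<le> \<tau> i (t i)" using T i ti by fastforce
    show "\<tau> i (t i) \<le> n" using weak_chain[of "l i" "\<tau> i" "t i" "l i"] T i ti by auto
  qed
  have ai: "\<And>j. 1 \<le> j \<Longrightarrow> j \<le> n \<Longrightarrow> a i (j - 1) < a i j" if "i \<in> {1..d}" for i
    using A that by auto
  show "Fvec d n a ` DeltaH d n \<tau> t = boxH d a \<tau> t"
  proof
    show "Fvec d n a ` DeltaH d n \<tau> t \<subseteq> boxH d a \<tau> t"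
    proof
      fix y assume "y \<in> Fvec d n a ` DeltaH d n \<tau> t"
      then obtain z where z: "z \<in> DeltaH d n \<tau> t" and y: "y = Fvec d n a z" by blast
      show "y \<in> boxH d a \<tau> t"
        unfolding y boxH_def Fvec_def
      proof (rule restrict_PiE_iff[THEN iffD2], intro ballI)
        fix i assume i: "i \<in> {1..d}"
        have zi: "z i \<in> Delta_i n" using z i zrow unfolding DeltaH_def by auto
        have c: "(\<forall>j\<in>{0..n}. j \<le> \<tau> i (t i - 1) \<longrightarrow> z i j = 1) \<and> (\<forall>j\<in>{0..n}. j > \<tau> i (t i) \<longrightarrow> z i j = 0)"
          using z i unfolding DeltaH_def by auto
        show "F_i n a i (z i) \<in> {a i (\<tau> i (t i - 1))..a i (\<tau> i (t i))}"
          using row_F_bounds[where zi="z i" and n=n and p="\<tau> i (t i - 1)" and q="\<tau> i (t i)" and ai="a i"]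
            zi pq[OF i] ai[OF i] c unfolding F_i_def by auto
      qed
    qed
    show "boxH d a \<tau> t \<subseteq> Fvec d n a ` DeltaH d n \<tau> t"
    proof
      fix x assume x: "x \<in> boxH d a \<tau> t"
      have xi: "a i (\<tau> i (t i - 1)) \<le> x i \<and> x i \<le> a i (\<tau> i (t i))" if "i \<in> {1..d}" for i
        using x that unfolding boxH_def by auto
      define z where "z = restrict (\<lambda>i. rowz n (a i) (x i)) {1..d}"
      have props: "rowz n (a i) (x i) \<in> Delta_i n \<and>
        (\<forall>j\<in>{0..n}. j \<le> \<tau> i (t i - 1) \<longrightarrow> rowz n (a i) (x i) j = 1) \<and>
        (\<forall>j\<in>{0..n}. j > \<tau> i (t i) \<longrightarrow> rowz n (a i) (x i) j = 0) \<and>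
        a i 0 * rowz n (a i) (x i) 0 + (\<Sum>j=1..n. (a i j - a i (j - 1)) * rowz n (a i) (x i) j) = x i"
        if i: "i \<in> {1..d}" for i
        using rowz_props[where n=n and p="\<tau> i (t i - 1)" and q="\<tau> i (t i)" and ai="a i" and x="x i"]
          pq[OF i] ai[OF i] xi[OF i] by blast
      have "z \<in> DeltaH d n \<tau> t" using props unfolding DeltaH_def Delta_def z_def by auto
      moreover have "Fvec d n a z = x"
      proof
        fix i show "Fvec d n a z i = x i"
        proof (cases "i \<in> {1..d}")
          case True then show ?thesis using props[OF True] unfolding Fvec_def z_def F_i_def by (simp add: rowz_def)
        next
          case False
          have "x \<in> extensional {1..d}" using x unfolding boxH_def by (auto simp: PiE_def)
          then show ?thesis using False unfolding Fvec_def by (auto simp add: extensional_def)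
        qed
      qed
      ultimately show "x \<in> Fvec d n a ` DeltaH d n \<tau> t" by force
    qed
  qed
qed

end
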